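(* Suppose $\mathit{Act}$ is finite and $|\mathit{Act}|\ge2$. Then $\mathcal{E}_{\omega,f}'=\mathcal{E}_\omega\cup\mathcal{E}_{v,f}'$ is complete for $\simeq_\omega$ over open monitors: for all monitors $m,n$, if $m\simeq_\omega n$ then $\mathcal{E}_{\omega,f}'\vdash m=n$.
   Context: Monitors: terms $m,n ::= v \mid a.m \mid m+n \mid x$ over a finite action set $\mathit{Act}$ and variables $x$, verdicts $v::=\mathit{end}\mid\mathit{yes}\mid\mathit{no}$. $\sum_{i\in I}m_i$ is $\mathit{end}$ for $I=\emptyset$. Semantics: $\xrightarrow{\alpha}$ ($\alpha\in\mathit{Act}\cup\{\tau\}$) is the least relation with $a.m\xrightarrow{a}m$; $m\xrightarrow{\alpha}m'$ implies $m+n\xrightarrow{\alpha}m'$ and $n+m\xrightarrow{\alpha}m'$; $v\xrightarrow{\alpha}v$ for verdicts $v$. Weak transitions: $m\xRightarrow{\varepsilon}m'$ iff $m(\xrightarrow{\tau})^*m'$; $m\xRightarrow{a}m'$ iff $m\xRightarrow{\varepsilon}\xrightarrow{a}\xRightarrow{\varepsilon}m'$; $m\xRightarrow{as'}m'$ ($s'\ne\varepsilon$) iff $m\xRightarrow{a}m_1\xRightarrow{s'}m'$. For closed $m$, $L_a(m)=\{s\mid m\xRightarrow{s}\mathit{yes}\}$, $L_r(m)=\{s\mid m\xRightarrow{s}\mathit{no}\}$; closed $m\simeq_\omega n$ iff $L_a(m)\cdot\mathit{Act}^\omega=L_a(n)\cdot\mathit{Act}^\omega$ and $L_r(m)\cdot\mathit{Act}^\omega=L_r(n)\cdot\mathit{Act}^\omega$;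 for open terms iff $\sigma(m)\simeq_\omega\sigma(n)$ for all closed substitutions $\sigma$. Notation for $s\in\mathit{Act}^*$: $s.m$ is $a_1.(\cdots a_k.m)$ if $s=a_1\dots a_k$ ($\varepsilon.m=m$); $s^1=s$, $s^i=ss^{i-1}$; $\mathit{pre}(s)$ is the set of prefixes of $s$; $\overline{s}^{\le}(m)=\sum_{|s'|\le|s|,\ s'\notin\mathit{pre}(s)}s'.m$; $\overline{s}(m)=\overline{s}^{\le}(m)+s.\sum_{a\in\mathit{Act}}a.m$; $\overline{s}^{(1)}(m)=\overline{s}(m)$ and for $k\ge2$, $\overline{s}^{(k)}(m)=\sum_{1\le i<k-1}s^i.\overline{s}^{\le}(m)+s^{k-1}.\overline{s}(m)$. $\mathcal{E}\vdash m=n$ denotes derivability by reflexivity, symmetry, transitivity, substitution and congruence for $a.\_$ and $+$. $\mathcal{E}_v$: (A1) $x+y=y+x$; (A2) $x+(y+z)=(x+y)+z$; (A3) $x+x=x$; (A4) $x+\mathit{end}=x$; for each $a\in\mathit{Act}$: ($E_a$) $a.\mathit{end}=\mathit{end}$; ($Y_a$) $\mathit{yes}=\mathit{yes}+a.\mathit{yes}$; ($N_a$) $\mathit{no}=\mathit{no}+a.\mathit{no}$; ($D_a$) $a.(x+y)=a.x+a.y$. $\mathcal{E}_\omega=\mathcal{E}_v\cup\{Y_\omega,N_\omega\}$ with ($Y_\omega$) $\mathit{yes}=\sum_{a\in\mathit{Act}}a.\mathit{yes}$, ($N_\omega$) $\mathit{no}=\sum_{a\in\mathit{Act}}a.\mathit{no}$.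 $\mathcal{E}_{v,f}'=\mathcal{E}_v\cup\{O1\}\cup\mathcal{O}$ with (O1) $\mathit{yes}+\mathit{no}=\mathit{yes}+\mathit{no}+x$ and $\mathcal{O}=\{O2_{s,k}\mid s\in\mathit{Act}^*,k\ge1\}$, ($O2_{s,k}$) $x+s.x+\overline{s}^{(k)}(\mathit{yes}+\mathit{no})=x+\overline{s}^{(k)}(\mathit{yes}+\mathit{no})$. *)

theory Defs
  imports Main "HOL-Library.Sublist"
begin

datatype ('a, 'x) mon =
    End | Yes | No
  | Act 'a "('a, 'x) mon"
  | Plus "('a, 'x) mon" "('a, 'x) mon"
  | Var 'x

fun is_verdict :: "('a, 'x) mon \<Rightarrow> bool" where
  "is_verdict End = True"
| "is_verdict Yes = True"
| "is_verdict No = True"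
| "is_verdict _ = False"

fun closed :: "('a, 'x) mon \<Rightarrow> bool" where
  "closed (Var x) = False"
| "closed (Act a m) = closed m"
| "closed (Plus m n) = (closed m \<and> closed n)"
| "closed _ = True"

fun subst :: "('x \<Rightarrow> ('a, 'y) mon) \<Rightarrow> ('a, 'x) mon \<Rightarrow> ('a, 'y) mon" where
  "subst \<sigma> (Var x) = \<sigma> x"
| "subst \<sigma> (Act a m) = Act a (subst \<sigma> m)"
| "subst \<sigma> (Plus m n) = Plus (subst \<sigma> m) (subst \<sigma> n)"
| "subst \<sigma> End = End"
| "subst \<sigma> Yes = Yes"
| "subst \<sigma> No = No"

fun sumL :: "('a, 'x) mon list \<Rightarrow> ('a, 'x) mon" where
  "sumL [] = End"
| "sumL (m # ms) = Plus m (sumL ms)"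

definition sumSet :: "('i \<Rightarrow> ('a, 'x) mon) \<Rightarrow> 'i set \<Rightarrow> ('a, 'x) mon" where
  "sumSet f A = sumL (map f (SOME xs. set xs = A \<and> distinct xs))"

definition pref :: "'a list \<Rightarrow> ('a, 'x) mon \<Rightarrow> ('a, 'x) mon" where
  "pref s m = foldr Act s m"

definition wpow :: "'a list \<Rightarrow> nat \<Rightarrow> 'a list" where
  "wpow s i = concat (replicate i s)"

text \<open>Labels: Some a is action a, None is tau.\<close>
inductive step :: "('a, 'x) mon \<Rightarrow> 'a option \<Rightarrow> ('a, 'x) mon \<Rightarrow> bool" where
  st_act: "step (Act a m) (Some a) m"
| st_sumL: "step m \<alpha> m' \<Longrightarrow> step (Plus m n) \<alpha> m'"
| st_sumR: "step m \<alpha> m' \<Longrightarrow> step (Plus n m) \<alpha> m'"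
| st_verd: "is_verdict v \<Longrightarrow> step v \<alpha> v"

definition tau_star :: "('a, 'x) mon \<Rightarrow> ('a, 'x) mon \<Rightarrow> bool" where
  "tau_star = (\<lambda>m m'. step m None m')\<^sup>*\<^sup>*"

inductive wtrace :: "('a, 'x) mon \<Rightarrow> 'a list \<Rightarrow> ('a, 'x) mon \<Rightarrow> bool" where
  wt_eps: "tau_star m m' \<Longrightarrow> wtrace m [] m'"
| wt_cons: "tau_star m m1 \<Longrightarrow> step m1 (Some a) m2 \<Longrightarrow> wtrace m2 s m' \<Longrightarrow> wtrace m (a # s) m'"

definition La :: "('a, 'x) mon \<Rightarrow> 'a list set" where
  "La m = {s. wtrace m s Yes}"

definition Lr :: "('a, 'x) mon \<Rightarrow> 'a list set" where
  "Lr m = {s. wtrace m s No}"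

text \<open>L . Act^omega, infinite words as functions nat => 'a\<close>
definition omega_ext :: "'a list set \<Rightarrow> (nat \<Rightarrow> 'a) set" where
  "omega_ext L = {w. \<exists>s\<in>L. \<forall>i<length s. w i = s ! i}"

definition omega_eq_closed :: "('a, 'x) mon \<Rightarrow> ('a, 'x) mon \<Rightarrow> bool" where
  "omega_eq_closed m n \<longleftrightarrow>
     omega_ext (La m) = omega_ext (La n) \<and> omega_ext (Lr m) = omega_ext (Lr n)"

definition omega_eq :: "('a, 'x) mon \<Rightarrow> ('a, 'x) mon \<Rightarrow> bool" where
  "omega_eq m n \<longleftrightarrow> (\<forall>\<sigma> :: 'x \<Rightarrow> ('a, 'x) mon. (\<forall>x. closed (\<sigma> x)) \<longrightarrow>
      omega_eq_closed (subst \<sigma> m) (subst \<sigma> n))"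

definition sumAct :: "('a, 'x) mon \<Rightarrow> ('a, 'x) mon" where
  "sumAct m = sumSet (\<lambda>a. Act a m) UNIV"

definition ovle :: "'a list \<Rightarrow> ('a, 'x) mon \<Rightarrow> ('a, 'x) mon" where
  "ovle s m = sumSet (\<lambda>s'. pref s' m) {s'. length s' \<le> length s \<and> \<not> prefix s' s}"

definition ovl :: "'a list \<Rightarrow> ('a, 'x) mon \<Rightarrow> ('a, 'x) mon" where
  "ovl s m = Plus (ovle s m) (pref s (sumAct m))"

definition ovk :: "'a list \<Rightarrow> nat \<Rightarrow> ('a, 'x) mon \<Rightarrow> ('a, 'x) mon" where
  "ovk s k m = (if k \<le> 1 then ovl s m
     else Plus (sumL (map (\<lambda>i. pref (wpow s i) (ovle s m)) [1..<k - 1]))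
               (pref (wpow s (k - 1)) (ovl s m)))"

inductive deriv :: "('a, 'x) mon \<Rightarrow> ('a, 'x) mon \<Rightarrow> bool" where
  refl: "deriv m m"
| sym: "deriv m n \<Longrightarrow> deriv n m"
| trans: "deriv m n \<Longrightarrow> deriv n p \<Longrightarrow> deriv m p"
| subst_rule: "deriv m n \<Longrightarrow> deriv (subst \<sigma> m) (subst \<sigma> n)"
| cong_act: "deriv m n \<Longrightarrow> deriv (Act a m) (Act a n)"
| cong_plus: "deriv m n \<Longrightarrow> deriv m' n' \<Longrightarrow> deriv (Plus m m') (Plus n n')"
| A1: "deriv (Plus x y) (Plus y x)"
| A2: "deriv (Plus x (Plus y z)) (Plus (Plus x y) z)"
| A3: "deriv (Plus x x) x"
| A4: "deriv (Plus x End) x"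
| E_a: "deriv (Act a End) End"
| Y_a: "deriv Yes (Plus Yes (Act a Yes))"
| N_a: "deriv No (Plus No (Act a No))"
| D_a: "deriv (Act a (Plus x y)) (Plus (Act a x) (Act a y))"
| Y_omega: "deriv Yes (sumAct Yes)"
| N_omega: "deriv No (sumAct No)"
| O1: "deriv (Plus Yes No) (Plus (Plus Yes No) x)"
| O2: "k \<ge> 1 \<Longrightarrow> deriv (Plus (Plus x (pref s x)) (ovk s k (Plus Yes No)))
                          (Plus x (ovk s k (Plus Yes No)))"

end

theory Submission
  imports Defs
begin


definition LV :: "('a,'x) mon \<Rightarrow> ('a,'x) mon \<Rightarrow> 'a list set" where
  "LV c m = {s. wtrace m s c}"

lemma step_Act_inv: "step (Act a p) \<alpha> q \<Longrightarrow> \<alpha> = Some a \<and> q = p"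
  by (erule step.cases) auto

lemma step_Plus_inv: "step (Plus p q) \<alpha> r \<Longrightarrow> step p \<alpha> r \<or> step q \<alpha> r"
  by (erule step.cases) auto

lemma step_Var_inv: "step (Var x) \<alpha> r \<Longrightarrow> False"
  by (erule step.cases) auto

lemma step_verd_inv: "step v \<alpha> r \<Longrightarrow> is_verdict v \<Longrightarrow> r = v"
  by (erule step.cases) auto

lemma tau_Act: "tau_star (Act a p) r \<Longrightarrow> r = Act a p"
  unfolding tau_star_def
  by (induction rule: rtranclp_induct) (auto dest: step_Act_inv)

lemma tau_Var: "tau_star (Var x) r \<Longrightarrow> r = Var x"
  unfolding tau_star_def
  by (induction rule: rtranclp_induct) (auto dest: step_Var_inv)

lemma tau_verd: "tau_star v r \<Longrightarrow> is_verdict v \<Longrightarrow> r = v"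
  unfolding tau_star_def
  by (induction rule: rtranclp_induct) (auto dest: step_verd_inv)

lemma tau_Plus: "tau_star (Plus p q) r \<Longrightarrow> r = Plus p q \<or> tau_star p r \<or> tau_star q r"
  unfolding tau_star_def
  by (erule converse_rtranclpE) (auto dest!: step_Plus_inv intro: converse_rtranclp_into_rtranclp)

lemma wt_Act: "wtrace (Act a p) s r \<Longrightarrow> r \<noteq> Act a p \<Longrightarrow> \<exists>s'. s = a # s' \<and> wtrace p s' r"
  by (erule wtrace.cases) (auto dest!: tau_Act step_Act_inv)

lemma wt_Act_intro: "wtrace p s r \<Longrightarrow> wtrace (Act a p) (a # s) r"
  by (rule wt_cons[of "Act a p" "Act a p"]) (auto simp: tau_star_def intro: st_act)

lemma wt_Plus: "wtrace (Plus p q) s r \<Longrightarrow> r \<noteq> Plus p q \<Longrightarrow> wtrace p s r \<or> wtrace q s r"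
proof (erule wtrace.cases)
  fix m m' assume "Plus p q = m" "s = []" "r = m'" "tau_star m m'" "r \<noteq> Plus p q"
  then have "tau_star p m' \<or> tau_star q m'" using tau_Plus by blast
  then show ?thesis using \<open>s = []\<close> \<open>r = m'\<close> by (auto intro: wt_eps)
next
  fix m m1 a m2 s' m'
  assume h: "Plus p q = m" "s = a # s'" "r = m'" "tau_star m m1" "step m1 (Some a) m2" "wtrace m2 s' m'"
  from h tau_Plus[of p q m1] have "m1 = Plus p q \<or> tau_star p m1 \<or> tau_star q m1" by simp
  then show ?thesis
  proof (elim disjE)
    assume "m1 = Plus p q"
    then have "step p (Some a) m2 \<or> step q (Some a) m2" using h step_Plus_inv by blast
    then show ?thesis using h by (auto intro: wt_cons simp: tau_star_def)
  qed (use h in \<open>auto intro: wt_cons\<close>)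
qed

lemma wt_Plus_introL: "wtrace p s r \<Longrightarrow> (s = [] \<and> r = p) \<or> wtrace (Plus p q) s r"
proof (erule wtrace.cases)
  fix m m' assume h: "p = m" "s = []" "r = m'" "tau_star m m'"
  from h(4) show ?thesis unfolding tau_star_def
  proof (cases rule: converse_rtranclpE)
    case base then show ?thesis using h by simp
  next
    case (step y)
    then have "tau_star (Plus p q) r" using h unfolding tau_star_def
      by (auto intro: converse_rtranclp_into_rtranclp st_sumL)
    then show ?thesis using h by (auto intro: wt_eps)
  qed
next
  fix m m1 a m2 s' m'
  assume h: "p = m" "s = a # s'" "r = m'" "tau_star m m1" "step m1 (Some a) m2" "wtrace m2 s' m'"
  from h(4)[unfolded tau_star_def] have "tau_star (Plus p q) m1 \<or> (m1 = p)"
  proof (cases rule: converse_rtranclpE)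
    case (step y)
    then show ?thesis using h by (metis tau_star_def converse_rtranclp_into_rtranclp st_sumL)
  qed (use h in simp)
  then show ?thesis
  proof
    assume "m1 = p"
    then have "step (Plus p q) (Some a) m2" using h by (auto intro: st_sumL)
    then show ?thesis using h by (auto intro: wt_cons simp: tau_star_def)
  qed (use h in \<open>auto intro: wt_cons\<close>)
qed

lemma wt_Plus_introR: "wtrace p s r \<Longrightarrow> (s = [] \<and> r = p) \<or> wtrace (Plus q p) s r"
proof (erule wtrace.cases)
  fix m m' assume h: "p = m" "s = []" "r = m'" "tau_star m m'"
  from h(4) show ?thesis unfolding tau_star_def
  proof (cases rule: converse_rtranclpE)
    case base then show ?thesis using h by simp
  next
    case (step y)
    then have "tau_star (Plus q p) r" using h unfolding tau_star_def
      by (auto intro: converse_rtranclp_into_rtranclp st_sumR)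
    then show ?thesis using h by (auto intro: wt_eps)
  qed
next
  fix m m1 a m2 s' m'
  assume h: "p = m" "s = a # s'" "r = m'" "tau_star m m1" "step m1 (Some a) m2" "wtrace m2 s' m'"
  from h(4)[unfolded tau_star_def] have "tau_star (Plus q p) m1 \<or> (m1 = p)"
  proof (cases rule: converse_rtranclpE)
    case (step y)
    then show ?thesis using h by (metis tau_star_def converse_rtranclp_into_rtranclp st_sumR)
  qed (use h in simp)
  then show ?thesis
  proof
    assume "m1 = p"
    then have "step (Plus q p) (Some a) m2" using h by (auto intro: st_sumR)
    then show ?thesis using h by (auto intro: wt_cons simp: tau_star_def)
  qed (use h in \<open>auto intro: wt_cons\<close>)
qed

lemma wt_verd: "wtrace m s r \<Longrightarrow> is_verdict m \<Longrightarrow> r = m"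
  by (induction rule: wtrace.induct) (auto dest: tau_verd step_verd_inv)

lemma wt_Var: "wtrace m s r \<Longrightarrow> m = Var x \<Longrightarrow> r = Var x"
proof (induction rule: wtrace.induct)
  case (wt_cons m m1 a m2 s m')
  then show ?case using tau_Var step_Var_inv by metis
qed (use tau_Var in auto)

lemma wt_verd_self: "is_verdict v \<Longrightarrow> wtrace v s v"
proof (induction s)
  case Nil then show ?case by (auto intro: wt_eps simp: tau_star_def)
next
  case (Cons a s)
  then show ?case by (auto intro!: wt_cons[of v v a v] st_verd simp: tau_star_def)
qed

definition cv :: "('a,'x) mon \<Rightarrow> bool" where "cv c \<longleftrightarrow> c = Yes \<or> c = No"

lemma LV_Act: "cv c \<Longrightarrow> LV c (Act a p) = (Cons a) ` LV c p"
  unfolding LV_def cv_def by (auto dest: wt_Act intro: wt_Act_intro)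

lemma vL: "is_verdict v \<Longrightarrow> step (Plus v q) None v"
  by (intro st_sumL st_verd)
lemma vR: "is_verdict v \<Longrightarrow> step (Plus q v) None v"
  by (intro st_sumR st_verd)

lemma LV_Plus: "cv c \<Longrightarrow> LV c (Plus p q) = LV c p \<union> LV c q"
proof -
  assume c: "cv c"
  have tc: "wtrace (Plus c q') [] c" "wtrace (Plus q' c) [] c" for q'
    using c unfolding cv_def
    by (auto intro!: wt_eps r_into_rtranclp vL vR simp: tau_star_def)
  show ?thesis
    unfolding LV_def using c tc unfolding cv_def
    by (auto dest: wt_Plus wt_Plus_introL[where q=q] wt_Plus_introR[where q=p])
qed

lemma LV_self: "cv c \<Longrightarrow> LV c c = UNIV"
  unfolding LV_def cv_def by (auto intro: wt_verd_self)

lemma LV_other: "is_verdict c' \<Longrightarrow> c' \<noteq> c \<Longrightarrow> LV c c' = {}"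
  unfolding LV_def by (auto dest: wt_verd)

lemma LV_End: "cv c \<Longrightarrow> LV c End = {}"
  by (rule LV_other) (auto simp: cv_def)



fun paths :: "('a,'x) mon \<Rightarrow> ('a list \<times> ('a,'x) mon) list" where
  "paths End = []"
| "paths Yes = [([],Yes)]"
| "paths No = [([],No)]"
| "paths (Var x) = [([],Var x)]"
| "paths (Act a m) = map (\<lambda>(s,l). (a#s,l)) (paths m)"
| "paths (Plus m n) = paths m @ paths n"

lemma paths_leaf: "(s,l) \<in> set (paths m) \<Longrightarrow> l = Yes \<or> l = No \<or> (\<exists>x. l = Var x)"
  by (induction m arbitrary: s) auto

lemma pref_Cons[simp]: "pref (a#s) m = Act a (pref s m)" by (simp add: pref_def)
lemma pref_Nil[simp]: "pref [] m = m" by (simp add: pref_def)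
lemma pref_append: "pref (s@t) m = pref s (pref t m)" by (simp add: pref_def)

lemma LV_pref: "cv c \<Longrightarrow> LV c (pref s p) = (\<lambda>v. s @ v) ` LV c p"
  by (induction s) (auto simp: LV_Act image_image)

lemma sem_paths: "cv c \<Longrightarrow>
  LV c (subst \<sigma> m) = (\<Union>(s,l)\<in>set (paths m). (\<lambda>v. s @ v) ` LV c (subst \<sigma> l))"
proof (induction m)
  case End then show ?case by (simp add: LV_End)
next
  case (Act a m) then show ?case by (simp add: LV_Act image_UN image_image split_def)
next
  case (Plus m1 m2) then show ?case by (simp add: LV_Plus)
qed auto

lemma closed_pref: "closed m \<Longrightarrow> closed (pref s m)"
  by (induction s) auto

lemmas dsym = deriv.sym
lemmas dtrans = deriv.trans
lemmas drefl = deriv.refl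
declare dtrans[trans]

lemma sumL_append: "deriv (sumL (xs@ys)) (Plus (sumL xs) (sumL ys))"
proof (induction xs)
  case Nil
  have "deriv (sumL ys) (Plus (sumL ys) End)" by (rule dsym[OF deriv.A4])
  also have "deriv \<dots> (Plus End (sumL ys))" by (rule deriv.A1)
  finally show ?case by simp
next
  case (Cons x xs)
  have "deriv (Plus x (sumL (xs@ys))) (Plus x (Plus (sumL xs) (sumL ys)))"
    by (rule deriv.cong_plus[OF drefl Cons])
  also have "deriv \<dots> (Plus (Plus x (sumL xs)) (sumL ys))" by (rule deriv.A2)
  finally show ?case by simp
qed

lemma absorb1: "x \<in> set ys \<Longrightarrow> deriv (Plus (sumL ys) x) (sumL ys)"
proof (induction ys)
  case Nil then show ?case by simp
next
  case (Cons y ys)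
  show ?case
  proof (cases "x = y")
    case True
    have "deriv (Plus (Plus y (sumL ys)) y) (Plus y (Plus (sumL ys) y))"
      by (rule dsym[OF deriv.A2])
    also have "deriv \<dots> (Plus y (Plus y (sumL ys)))" by (rule deriv.cong_plus[OF drefl deriv.A1])
    also have "deriv \<dots> (Plus (Plus y y) (sumL ys))" by (rule deriv.A2)
    also have "deriv \<dots> (Plus y (sumL ys))" by (rule deriv.cong_plus[OF deriv.A3 drefl])
    finally show ?thesis using True by simp
  next
    case False
    then have "x \<in> set ys" using Cons by simp
    have "deriv (Plus (Plus y (sumL ys)) x) (Plus y (Plus (sumL ys) x))"
      by (rule dsym[OF deriv.A2])
    also have "deriv \<dots> (Plus y (sumL ys))"
      by (rule deriv.cong_plus[OF drefl Cons.IH[OF \<open>x \<in> set ys\<close>]])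
    finally show ?thesis by simp
  qed
qed

lemma absorb_list: "set xs \<subseteq> set ys \<Longrightarrow> deriv (Plus (sumL ys) (sumL xs)) (sumL ys)"
proof (induction xs)
  case Nil then show ?case by (simp add: deriv.A4)
next
  case (Cons x xs)
  have "deriv (Plus (sumL ys) (Plus x (sumL xs))) (Plus (Plus (sumL ys) x) (sumL xs))"
    by (rule deriv.A2)
  also have "deriv \<dots> (Plus (sumL ys) (sumL xs))"
    using Cons.prems by (intro deriv.cong_plus[OF absorb1 drefl]) simp
  also have "deriv \<dots> (sumL ys)" using Cons by simp
  finally show ?case by simp
qed

lemma sumL_set: "set xs = set ys \<Longrightarrow> deriv (sumL xs) (sumL ys)"
proof -
  assume h: "set xs = set ys"
  have "deriv (sumL xs) (Plus (sumL xs) (sumL ys))"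
    using absorb_list[of ys xs] h by (simp add: dsym)
  also have "deriv \<dots> (Plus (sumL ys) (sumL xs))" by (rule deriv.A1)
  also have "deriv \<dots> (sumL ys)" using absorb_list[of xs ys] h by simp
  finally show ?thesis .
qed

lemma sumL_map_cong: "(\<And>x. x \<in> set xs \<Longrightarrow> deriv (f x) (g x)) \<Longrightarrow>
   deriv (sumL (map f xs)) (sumL (map g xs))"
  by (induction xs) (auto intro: deriv.cong_plus drefl)

lemma Act_sumL: "deriv (Act a (sumL xs)) (sumL (map (Act a) xs))"
proof (induction xs)
  case Nil then show ?case by (simp add: deriv.E_a)
next
  case (Cons x xs)
  have "deriv (Act a (Plus x (sumL xs))) (Plus (Act a x) (Act a (sumL xs)))" by (rule deriv.D_a)
  also have "deriv \<dots> (Plus (Act a x) (sumL (map (Act a) xs)))"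
    by (rule deriv.cong_plus[OF drefl Cons])
  finally show ?case by simp
qed

lemma pref_cong: "deriv m n \<Longrightarrow> deriv (pref s m) (pref s n)"
  by (induction s) (auto intro: deriv.cong_act)

lemma pref_sumL: "deriv (pref s (sumL xs)) (sumL (map (pref s) xs))"
proof (induction s)
  case Nil then show ?case by (simp add: drefl)
next
  case (Cons a s)
  have "deriv (Act a (pref s (sumL xs))) (Act a (sumL (map (pref s) xs)))"
    using Cons by (rule deriv.cong_act)
  also have "deriv \<dots> (sumL (map (Act a) (map (pref s) xs)))" by (rule Act_sumL)
  finally show ?case by (simp add: comp_def)
qed

lemma pref_Plus: "deriv (pref s (Plus m n)) (Plus (pref s m) (pref s n))"
proof -
  have "deriv (pref s (Plus m n)) (pref s (Plus m (Plus n End)))"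
    by (rule pref_cong[OF deriv.cong_plus[OF drefl dsym[OF deriv.A4]]])
  also have "deriv \<dots> (Plus (pref s m) (Plus (pref s n) End))"
    using pref_sumL[of s "[m,n]"] by simp
  also have "deriv \<dots> (Plus (pref s m) (pref s n))"
    by (rule deriv.cong_plus[OF drefl deriv.A4])
  finally show ?thesis .
qed

lemma sumL_concat: "deriv (sumL (concat xss)) (sumL (map sumL xss))"
proof (induction xss)
  case Nil then show ?case by (simp add: drefl)
next
  case (Cons xs xss)
  have "deriv (sumL (xs @ concat xss)) (Plus (sumL xs) (sumL (concat xss)))" by (rule sumL_append)
  also have "deriv \<dots> (Plus (sumL xs) (sumL (map sumL xss)))" by (rule deriv.cong_plus[OF drefl Cons])
  finally show ?case by simp
qed

definition tm :: "'a list \<times> ('a,'x) mon \<Rightarrow> ('a,'x) mon" where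
  "tm p = pref (fst p) (snd p)"

lemma deriv_paths: "deriv m (sumL (map tm (paths m)))"
proof (induction m)
  case (Act a m)
  have "deriv (Act a m) (Act a (sumL (map tm (paths m))))" using Act by (rule deriv.cong_act)
  also have "deriv \<dots> (sumL (map (Act a) (map tm (paths m))))" by (rule Act_sumL)
  also have "map (Act a) (map tm (paths m)) = map tm (paths (Act a m))"
    by (auto simp: tm_def split: prod.splits)
  finally show ?case .
next
  case (Plus m1 m2)
  have "deriv (Plus m1 m2) (Plus (sumL (map tm (paths m1))) (sumL (map tm (paths m2))))"
    by (rule deriv.cong_plus[OF Plus])
  also have "deriv \<dots> (sumL (map tm (paths m1) @ map tm (paths m2)))" by (rule dsym[OF sumL_append])
  finally show ?case by simp
qed (auto simp: tm_def intro: dsym[OF deriv.A4] drefl)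



definition univ :: "'a::finite list" where "univ = (SOME xs. set xs = UNIV \<and> distinct xs)"

lemma set_univ: "set (univ :: 'a::finite list) = UNIV"
proof -
  have "\<exists>xs. set xs = (UNIV::'a set) \<and> distinct xs" by (rule finite_distinct_list) simp
  then show ?thesis unfolding univ_def by (metis (mono_tags, lifting) someI_ex)
qed

lemma sumAct_eq: "sumAct (m :: ('a::finite,'x) mon) = sumL (map (\<lambda>a. Act a m) univ)"
  by (simp add: sumAct_def sumSet_def univ_def)

fun words :: "nat \<Rightarrow> 'a::finite list list" where
  "words 0 = [[]]"
| "words (Suc k) = concat (map (\<lambda>a. map (Cons a) (words k)) univ)"

lemma set_words: "set (words k) = {w. length w = k}"
  by (induction k) (auto simp: set_univ length_Suc_conv)

lemma verd_omega: "cv c \<Longrightarrow> deriv c (sumAct (c :: ('a::finite,'x) mon))"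
  unfolding cv_def using deriv.Y_omega deriv.N_omega by blast

lemma expand_verd: "cv c \<Longrightarrow> deriv (c :: ('a::finite,'x) mon) (sumL (map (\<lambda>u. pref u c) (words k)))"
proof (induction k)
  case 0
  then show ?case by (simp add: dsym[OF deriv.A4])
next
  case (Suc k)
  have "deriv c (sumL (map (\<lambda>a. Act a c) univ))" using verd_omega[OF Suc.prems] by (simp add: sumAct_eq)
  also have "deriv \<dots> (sumL (map (\<lambda>a. Act a (sumL (map (\<lambda>u. pref u c) (words k)))) univ))"
    by (rule sumL_map_cong) (rule deriv.cong_act[OF Suc.IH[OF Suc.prems]])
  also have "deriv \<dots> (sumL (map (\<lambda>a. sumL (map (Act a) (map (\<lambda>u. pref u c) (words k)))) univ))"
    by (rule sumL_map_cong) (rule Act_sumL)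
  also have "\<dots> = sumL (map sumL (map (\<lambda>a. map (\<lambda>u. pref (a#u) c) (words k)) univ))"
    by (simp add: comp_def)
  also have "deriv \<dots> (sumL (concat (map (\<lambda>a. map (\<lambda>u. pref (a#u) c) (words k)) univ)))"
    by (rule dsym[OF sumL_concat])
  also have "\<dots> = sumL (map (\<lambda>u. pref u c) (words (Suc k)))"
    by (simp add: map_concat comp_def)
  finally show ?case .
qed

lemma expand_pref: "cv c \<Longrightarrow> deriv (pref s (c :: ('a::finite,'x) mon)) (sumL (map (\<lambda>u. pref (s@u) c) (words k)))"
proof -
  assume c: "cv c"
  have "deriv (pref s c) (pref s (sumL (map (\<lambda>u. pref u c) (words k))))"
    by (rule pref_cong[OF expand_verd[OF c]])
  also have "deriv \<dots> (sumL (map (pref s) (map (\<lambda>u. pref u c) (words k))))" by (rule pref_sumL)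
  finally show ?thesis by (simp add: comp_def pref_append)
qed

definition lev :: "nat \<Rightarrow> ('a::finite,'x) mon \<Rightarrow> ('a list \<times> ('a,'x) mon) list \<Rightarrow> 'a list list" where
  "lev L c R = filter (\<lambda>w. \<exists>p\<in>set R. snd p = c \<and> prefix (fst p) w) (words L)"

definition isv :: "('a,'x) mon \<Rightarrow> bool" where "isv l \<longleftrightarrow> l \<noteq> Yes \<and> l \<noteq> No"

definition expand :: "nat \<Rightarrow> 'a::finite list \<times> ('a,'x) mon \<Rightarrow> ('a list \<times> ('a,'x) mon) list" where
  "expand L p = (if isv (snd p) then [p] else map (\<lambda>u. (fst p @ u, snd p)) (words (L - length (fst p))))"

definition absb :: "nat \<Rightarrow> ('a::finite list \<times> ('a,'x) mon) list \<Rightarrow> 'a list \<Rightarrow> bool" where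
  "absb L R s \<longleftrightarrow> (\<forall>u. length u = L - length s \<longrightarrow> s@u \<in> set (lev L Yes R) \<and> s@u \<in> set (lev L No R))"

definition BL :: "nat \<Rightarrow> ('a::finite list \<times> ('a,'x) mon) list \<Rightarrow> ('a list \<times> ('a,'x) mon) list" where
  "BL L R = map (\<lambda>w. (w,Yes)) (lev L Yes R) @ map (\<lambda>w. (w,No)) (lev L No R)
            @ filter (\<lambda>p. isv (snd p) \<and> \<not> absb L R (fst p)) R"

definition TL :: "nat \<Rightarrow> ('a::finite list \<times> ('a,'x) mon) list \<Rightarrow> ('a list \<times> ('a,'x) mon) list" where
  "TL L R = filter (\<lambda>p. isv (snd p) \<and> absb L R (fst p)) R"

lemma NF1: "deriv (sumL (map tm R)) (sumL (map tm (concat (map (expand L) R))))"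
proof -
  have "deriv (sumL (map tm R)) (sumL (map (\<lambda>p. sumL (map tm (expand L p))) R))"
  proof (rule sumL_map_cong)
    fix p :: "'a list \<times> ('a,'b) mon"
    show "deriv (tm p) (sumL (map tm (expand L p)))"
    proof (cases "isv (snd p)")
      case True then show ?thesis by (simp add: expand_def dsym[OF deriv.A4])
    next
      case False
      then have "cv (snd p)" by (simp add: isv_def cv_def)
      then show ?thesis using False
        by (simp add: expand_def tm_def comp_def expand_pref)
    qed
  qed
  also have "\<dots> = sumL (map sumL (map (\<lambda>p. map tm (expand L p)) R))" by (simp add: comp_def)
  also have "deriv \<dots> (sumL (concat (map (\<lambda>p. map tm (expand L p)) R)))" by (rule dsym[OF sumL_concat])
  also have "\<dots> = sumL (map tm (concat (map (expand L) R)))" by (simp add: map_concat comp_def)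
  finally show ?thesis .
qed

lemma lev_iff: "w \<in> set (lev L c R) \<longleftrightarrow> length w = L \<and> (\<exists>p\<in>set R. snd p = c \<and> prefix (fst p) w)"
  by (auto simp: lev_def set_words)

lemma NF2: "\<forall>p\<in>set R. length (fst p) \<le> L \<Longrightarrow>
  set (concat (map (expand L) R)) = set (BL L R @ TL L R)"
proof -
  assume len: "\<forall>p\<in>set R. length (fst p) \<le> L"
  have "x \<in> set (concat (map (expand L) R)) \<longleftrightarrow> x \<in> set (BL L R @ TL L R)" for x
  proof
    assume "x \<in> set (concat (map (expand L) R))"
    then obtain p where p: "p \<in> set R" "x \<in> set (expand L p)" by auto
    show "x \<in> set (BL L R @ TL L R)"
    proof (cases "isv (snd p)")
      case True then show ?thesis using p by (auto simp: expand_def BL_def TL_def)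
    next
      case False
      then obtain u where u: "x = (fst p @ u, snd p)" "length u = L - length (fst p)"
        using p by (auto simp: expand_def set_words)
      then have "fst x \<in> set (lev L (snd p) R)" using p len by (auto simp: lev_iff)
      then show ?thesis using False u unfolding BL_def isv_def by auto
    qed
  next
    assume x: "x \<in> set (BL L R @ TL L R)"
    show "x \<in> set (concat (map (expand L) R))"
    proof (cases "isv (snd x)")
      case True
      then have "x \<in> set R" using x by (auto simp: BL_def TL_def isv_def)
      then show ?thesis using True by (force simp: expand_def)
    next
      case False
      then have "fst x \<in> set (lev L (snd x) R)" using x by (auto simp: BL_def TL_def isv_def)
      then obtain p where p: "p \<in> set R" "snd p = snd x" "prefix (fst p) (fst x)" "length (fst x) = L"
        by (auto simp: lev_iff)
      then obtain u where u: "fst x = fst p @ u" by (auto simp: prefix_def)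
      have "x \<in> set (expand L p)" using False p u
        by (auto simp: expand_def set_words image_iff intro!: exI[of _ u] prod_eqI)
      then show ?thesis using p by auto
    qed
  qed
  then show ?thesis by blast
qed

lemma absorb_one:
  assumes "absb L R s" "length s \<le> L"
  shows "deriv (Plus (sumL (map tm (BL L R))) (pref s l)) (sumL (map tm (BL L R)))"
proof -
  define k where "k = L - length s"
  define BY where "BY = map (\<lambda>u. pref (s@u) (Yes::('a,'b) mon)) (words k)"
  define BN where "BN = map (\<lambda>u. pref (s@u) (No::('a,'b) mon)) (words k)"
  define S where "S = sumL (map tm (BL L R))"
  have sub: "set (BY @ BN) \<subseteq> set (map tm (BL L R))"
  proof
    fix t assume "t \<in> set (BY @ BN)"
    then obtain u c where u: "length u = k" "t = pref (s@u) c" "c = Yes \<or> c = No"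
      by (auto simp: BY_def BN_def set_words)
    then have "s@u \<in> set (lev L c R)" using assms by (auto simp: absb_def k_def)
    then have "(s@u, c) \<in> set (BL L R)" using u(3) by (auto simp: BL_def)
    then show "t \<in> set (map tm (BL L R))" using u by (force simp: tm_def)
  qed
  let ?X = "pref s (Plus Yes No)"
  have "deriv ?X (Plus (pref s Yes) (pref s No))" by (rule pref_Plus)
  also have "deriv \<dots> (Plus (sumL BY) (sumL BN))"
    unfolding BY_def BN_def by (intro deriv.cong_plus expand_pref) (auto simp: cv_def)
  also have "deriv \<dots> (sumL (BY @ BN))" by (rule dsym[OF sumL_append])
  finally have X: "deriv ?X (sumL (BY @ BN))" .
  have "deriv ?X (pref s (Plus (Plus Yes No) l))" by (rule pref_cong[OF deriv.O1])
  also have "deriv \<dots> (Plus ?X (pref s l))" by (rule pref_Plus)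
  finally have X2: "deriv ?X (Plus ?X (pref s l))" .
  have B: "deriv (sumL (BY @ BN)) (Plus (sumL (BY @ BN)) (pref s l))"
    using X X2 by (meson dsym dtrans deriv.cong_plus drefl)
  have "deriv (Plus S (pref s l)) (Plus (Plus S (sumL (BY @ BN))) (pref s l))"
    unfolding S_def by (rule deriv.cong_plus[OF dsym[OF absorb_list[OF sub]] drefl])
  also have "deriv \<dots> (Plus S (Plus (sumL (BY @ BN)) (pref s l)))" by (rule dsym[OF deriv.A2])
  also have "deriv \<dots> (Plus S (sumL (BY @ BN)))" by (rule deriv.cong_plus[OF drefl dsym[OF B]])
  also have "deriv \<dots> S" unfolding S_def by (rule absorb_list[OF sub])
  finally show ?thesis unfolding S_def .
qed

lemma absorb_all: "(\<And>t. t \<in> set T \<Longrightarrow> deriv (Plus S t) S) \<Longrightarrow> deriv (Plus S (sumL T)) S"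
proof (induction T)
  case Nil then show ?case by (simp add: deriv.A4)
next
  case (Cons t T)
  have "deriv (Plus S (Plus t (sumL T))) (Plus (Plus S t) (sumL T))" by (rule deriv.A2)
  also have "deriv \<dots> (Plus S (sumL T))" by (rule deriv.cong_plus[OF Cons.prems drefl]) simp
  also have "deriv \<dots> S" using Cons by simp
  finally show ?case by simp
qed

lemma NF:
  assumes "\<forall>p\<in>set (paths m). length (fst p) \<le> L"
  shows "deriv (m :: ('a::finite,'x) mon) (sumL (map tm (BL L (paths m))))"
proof -
  let ?P = "paths m"
  have "deriv m (sumL (map tm ?P))" by (rule deriv_paths)
  also have "deriv \<dots> (sumL (map tm (concat (map (expand L) ?P))))" by (rule NF1)
  also have "deriv \<dots> (sumL (map tm (BL L ?P @ TL L ?P)))"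
    by (rule sumL_set) (simp only: set_map NF2[OF assms])
  also have "deriv \<dots> (Plus (sumL (map tm (BL L ?P))) (sumL (map tm (TL L ?P))))"
    by (simp add: sumL_append)
  also have "deriv \<dots> (sumL (map tm (BL L ?P)))"
  proof (rule absorb_all)
    fix t assume "t \<in> set (map tm (TL L ?P))"
    then obtain p where p: "p \<in> set ?P" "absb L ?P (fst p)" "t = pref (fst p) (snd p)"
      by (auto simp: TL_def tm_def)
    then show "deriv (Plus (sumL (map tm (BL L ?P))) t) (sumL (map tm (BL L ?P)))"
      using absorb_one[of L ?P "fst p" "snd p"] assms by auto
  qed
  finally show ?thesis .
qed



lemma subst_cv: "cv c \<Longrightarrow> subst \<sigma> c = c"
  by (auto simp: cv_def)

lemma leafLV:
  assumes "(t,l) \<in> set (paths n)" "cv c" "LV c (subst \<sigma> l) \<noteq> {}"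
  shows "l = c \<or> (\<exists>y. l = Var y \<and> LV c (\<sigma> y) \<noteq> {})"
proof -
  from paths_leaf[OF assms(1)] have "l = Yes \<or> l = No \<or> (\<exists>x. l = Var x)" .
  then show ?thesis
  proof (elim disjE exE)
    assume "l = Yes" then show ?thesis using assms(2,3) LV_other[of Yes c] by (auto simp: cv_def)
  next
    assume "l = No" then show ?thesis using assms(2,3) LV_other[of No c] by (auto simp: cv_def)
  qed (use assms in auto)
qed

lemma prefix_agree: "length t \<le> length w \<Longrightarrow> (\<And>i. i < length t \<Longrightarrow> t!i = w!i) \<Longrightarrow> prefix t w"
proof -
  assume h: "length t \<le> length w" "\<And>i. i < length t \<Longrightarrow> t!i = w!i"
  have "take (length t) w = t" using h by (intro nth_equalityI) auto
  then show ?thesis by (metis prefix_def append_take_drop_id)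
qed

lemma in_ext: "z \<in> omega_ext A \<longleftrightarrow> (\<exists>s\<in>A. \<forall>i<length s. z i = s!i)"
  by (simp add: omega_ext_def)

lemma lev_sub:
  assumes oe: "\<And>\<sigma>. (\<forall>x. closed (\<sigma> x)) \<Longrightarrow> omega_ext (LV c (subst \<sigma> m)) = omega_ext (LV c (subst \<sigma> n))"
    and c: "cv c"
    and lenQ: "\<forall>p\<in>set (paths n). length (fst p) \<le> L"
    and w: "w \<in> set (lev L c (paths (m::('a::finite,'x) mon)))"
  shows "w \<in> set (lev L c (paths n))"
proof -
  define \<sigma>0 where "\<sigma>0 = (\<lambda>_::'x. (End::('a,'x) mon))"
  have cl: "\<forall>x. closed (\<sigma>0 x)" by (simp add: \<sigma>0_def)
  from w obtain p where p: "p \<in> set (paths m)" "snd p = c" "prefix (fst p) w" "length w = L"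
    by (auto simp: lev_iff)
  then obtain u where u: "w = fst p @ u" by (auto simp: prefix_def)
  have "u \<in> LV c (subst \<sigma>0 (snd p))" using p(2) c by (simp add: subst_cv LV_self)
  then have "w \<in> (\<lambda>v. fst p @ v) ` LV c (subst \<sigma>0 (snd p))" using u by (simp add: image_iff)
  then have wL: "w \<in> LV c (subst \<sigma>0 m)"
    by (subst sem_paths[OF c]) (intro UN_I[OF p(1)], simp add: split_def)
  define z where "z = (\<lambda>i. if i < L then w!i else undefined)"
  have "z \<in> omega_ext (LV c (subst \<sigma>0 m))"
    unfolding in_ext using wL p(4) by (auto simp: z_def)
  then have "z \<in> omega_ext (LV c (subst \<sigma>0 n))" using oe[OF cl] by simp
  then obtain y where y: "y \<in> LV c (subst \<sigma>0 n)" "\<forall>i<length y. z i = y!i"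
    unfolding in_ext by blast
  then have "y \<in> (\<Union>(s,l)\<in>set (paths n). (\<lambda>v. s @ v) ` LV c (subst \<sigma>0 l))"
    by (subst sem_paths[OF c, symmetric])
  then obtain t l y' where q: "(t,l) \<in> set (paths n)" "y = t @ y'" "y' \<in> LV c (subst \<sigma>0 l)"
    by blast
  then have "l = c \<or> (\<exists>y. l = Var y \<and> LV c (\<sigma>0 y) \<noteq> {})" using leafLV[OF q(1) c] by blast
  then have lc: "l = c" using LV_End[OF c] by (auto simp: \<sigma>0_def)
  have tl: "length t \<le> L" using lenQ q(1) by auto
  have "prefix t w"
  proof (rule prefix_agree)
    show "length t \<le> length w" using tl p(4) by simp
    fix i assume i: "i < length t"
    have "t!i = y!i" using q(2) i by (simp add: nth_append)
    also have "\<dots> = z i" using y(2) q(2) i by simp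
    also have "\<dots> = w!i" using i tl by (simp add: z_def)
    finally show "t!i = w!i" .
  qed
  then show ?thesis unfolding lev_iff using q(1) lc p(4) by (metis fst_conv snd_conv)
qed


lemma zpos:
  assumes ab: "a \<noteq> b" and "length s \<le> L" "length t \<le> L" "length t \<noteq> length s"
  shows "(if length t + length u + L < length (s @ u @ replicate L a @ [b])
          then (s @ u @ replicate L a @ [b]) ! (length t + length u + L) else a) \<noteq> b"
proof (cases "length t + length u + L < length (s @ u @ replicate L a @ [b])")
  case True
  define j where "j = length t + length u + L - length s - length u"
  have p: "length t + length u + L = length (s @ u) + j" "j < L" using assms True by (auto simp: j_def)
  have "(s @ u @ replicate L a @ [b]) ! (length t + length u + L) = ((s @ u) @ (replicate L a @ [b])) ! (length (s@u) + j)"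
    by (simp only: p(1) append_assoc)
  also have "\<dots> = a" using p(2) by (simp only: nth_append_length_plus) (simp add: nth_append)
  finally show ?thesis using True ab by simp
qed (use ab in simp)

lemma var_sub:
  assumes oe: "\<And>c (\<sigma>::'x \<Rightarrow> ('a::finite,'x) mon). cv c \<Longrightarrow> (\<forall>x. closed (\<sigma> x)) \<Longrightarrow>
       omega_ext (LV c (subst \<sigma> m)) = omega_ext (LV c (subst \<sigma> n))"
    and ab: "(a::'a::finite) \<noteq> b"
    and lenP: "\<forall>p\<in>set (paths m). length (fst p) \<le> L"
    and lenQ: "\<forall>p\<in>set (paths n). length (fst p) \<le> L"
    and levEq: "\<And>c. cv c \<Longrightarrow> set (lev L c (paths m)) = set (lev L c (paths n))"
    and sP: "(s, Var x) \<in> set (paths (m::('a,'x) mon))"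
    and nab: "\<not> absb L (paths m) s"
  shows "(s, Var x) \<in> set (paths n)"
proof (rule ccontr)
  assume sQ: "(s, Var x) \<notin> set (paths n)"
  from nab obtain u c where uc: "length u = L - length s" "cv c" "s@u \<notin> set (lev L c (paths m))"
    unfolding absb_def cv_def by blast
  have hs: "length s \<le> L" using lenP sP by force
  define v where "v = u @ replicate L a @ [b]"
  define \<sigma> where "\<sigma> = (\<lambda>_::'x. (End::('a,'x) mon))(x := pref v c)"
  have cl: "\<forall>y. closed (\<sigma> y)" using uc(2) by (auto simp: \<sigma>_def cv_def intro: closed_pref)
  have "v \<in> LV c (pref v c)" using LV_pref[OF uc(2), of v c] LV_self[OF uc(2)] by force
  then have "v \<in> LV c (subst \<sigma> (Var x))" by (simp add: \<sigma>_def)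
  then have "s @ v \<in> (\<lambda>w. s @ w) ` LV c (subst \<sigma> (Var x))" by blast
  then have svL: "s @ v \<in> LV c (subst \<sigma> m)"
    by (subst sem_paths[OF uc(2)]) (intro UN_I[OF sP], simp)
  define z where "z = (\<lambda>i. if i < length (s@v) then (s@v)!i else a)"
  have "z \<in> omega_ext (LV c (subst \<sigma> m))"
    unfolding in_ext using svL by (auto simp: z_def)
  then have "z \<in> omega_ext (LV c (subst \<sigma> n))" using oe[OF uc(2) cl] by simp
  then obtain y where y: "y \<in> LV c (subst \<sigma> n)" "\<forall>i<length y. z i = y!i"
    unfolding in_ext by blast
  then have "y \<in> (\<Union>(s,l)\<in>set (paths n). (\<lambda>v. s @ v) ` LV c (subst \<sigma> l))"
    by (subst sem_paths[OF uc(2), symmetric])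
  then obtain t l y' where q: "(t,l) \<in> set (paths n)" "y = t @ y'" "y' \<in> LV c (subst \<sigma> l)"
    by blast
  have tl: "length t \<le> L" using lenQ q(1) by force
  have zt: "z i = t!i" if "i < length t" for i
    using y(2) q(2) that by (simp add: nth_append)
  have zs: "z i = (s@u)!i" if "i < length (s@u)" for i
  proof -
    have "s @ v = (s@u) @ (replicate L a @ [b])" by (simp add: v_def)
    moreover have "i < length (s@v)" using that by (simp add: v_def)
    ultimately show ?thesis using that by (simp only: z_def if_True nth_append_left)
  qed
  have "l = c \<or> (\<exists>y. l = Var y \<and> LV c (\<sigma> y) \<noteq> {})" using leafLV[OF q(1) uc(2)] q(3) by blast
  then show False
  proof (elim disjE exE conjE)
    assume lc: "l = c"
    have "prefix t (s@u)"
    proof (rule prefix_agree)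
      show "length t \<le> length (s@u)" using tl uc(1) hs by simp
      fix i assume i: "i < length t"
      then show "t!i = (s@u)!i" using zt zs tl uc(1) hs by (metis \<open>length t \<le> length (s @ u)\<close> order_less_le_trans)
    qed
    then have "s@u \<in> set (lev L c (paths n))" unfolding lev_iff using q(1) lc uc(1) hs
      by (metis fst_conv snd_conv add_diff_inverse_nat length_append not_less)
    then show False using uc(3) levEq[OF uc(2)] by simp
  next
    fix y0 assume l: "l = Var y0" and ne: "LV c (\<sigma> y0) \<noteq> {}"
    have "y0 = x" using ne LV_End[OF uc(2)] by (auto simp: \<sigma>_def split: if_splits)
    then have "y' \<in> LV c (pref v c)" using q(3) l by (simp add: \<sigma>_def)
    then obtain r where r: "y' = v @ r" using LV_pref[OF uc(2)] by blast
    have "t \<noteq> s" using q(1) l \<open>y0 = x\<close> sQ by auto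
    have "length t \<noteq> length s"
    proof
      assume eq: "length t = length s"
      have "t = s"
      proof (rule nth_equalityI)
        show "length t = length s" by (rule eq)
        fix i assume "i < length t"
        then show "t!i = s!i" using zt[of i] eq by (simp add: z_def nth_append)
      qed
      then show False using \<open>t \<noteq> s\<close> by simp
    qed
    define p where "p = length t + length u + L"
    have "y ! p = b" using q(2) r by (simp add: p_def v_def nth_append)
    moreover have "p < length y" using q(2) r by (simp add: p_def v_def)
    ultimately have "z p = b" using y(2) by simp
    moreover have "z p \<noteq> b" unfolding z_def p_def v_def
      using zpos[OF ab hs tl \<open>length t \<noteq> length s\<close>, of u] by simp
    ultimately show False by simp
  qed
qed


lemma oe_of:
  assumes "omega_eq m n" "cv c" "\<forall>x. closed ((\<sigma>::'x \<Rightarrow> ('a,'x) mon) x)"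
  shows "omega_ext (LV c (subst \<sigma> m)) = omega_ext (LV c (subst \<sigma> (n::('a,'x) mon)))"
  using assms unfolding omega_eq_def omega_eq_closed_def La_def Lr_def LV_def cv_def by auto

theorem mainTheorem19:
  fixes m n :: "('a :: finite, 'x) mon"
  assumes "card (UNIV :: 'a set) \<ge> 2"
    and "omega_eq m n"
  shows "deriv m n"
proof -
  obtain a b :: 'a where ab: "a \<noteq> b"
  proof -
    have "\<exists>a b :: 'a. a \<noteq> b"
    proof (rule ccontr)
      assume "\<not> (\<exists>a b :: 'a. a \<noteq> b)"
      then have "(UNIV :: 'a set) = {undefined}" by auto
      moreover have "card {undefined::'a} = 1" by simp
      ultimately have "card (UNIV :: 'a set) = 1" by metis
      then show False using assms(1) by simp
    qed
    then show ?thesis using that by blast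
  qed
  define P where "P = paths m"
  define Q where "Q = paths n"
  define L where "L = sum_list (map (length \<circ> fst) (P @ Q))"
  have lenPQ: "\<forall>p\<in>set (P@Q). length (fst p) \<le> L"
  proof
    fix p assume "p \<in> set (P@Q)"
    then have "length (fst p) \<in> set (map (length \<circ> fst) (P@Q))" by (auto simp: image_iff)
    then show "length (fst p) \<le> L" unfolding L_def by (rule member_le_sum_list) simp_all
  qed
  have lenP: "\<forall>p\<in>set P. length (fst p) \<le> L" using lenPQ by simp
  have lenQ: "\<forall>p\<in>set Q. length (fst p) \<le> L" using lenPQ by simp
  have oe1: "\<And>c (\<sigma>::'x \<Rightarrow> ('a,'x) mon). cv c \<Longrightarrow> (\<forall>x. closed (\<sigma> x)) \<Longrightarrow>
       omega_ext (LV c (subst \<sigma> m)) = omega_ext (LV c (subst \<sigma> n))"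
    using oe_of[OF assms(2)] by blast
  have oe2: "\<And>c (\<sigma>::'x \<Rightarrow> ('a,'x) mon). cv c \<Longrightarrow> (\<forall>x. closed (\<sigma> x)) \<Longrightarrow>
       omega_ext (LV c (subst \<sigma> n)) = omega_ext (LV c (subst \<sigma> m))"
    using oe1 by metis
  have levEq: "set (lev L c P) = set (lev L c Q)" if c: "cv c" for c
    using lev_sub[OF oe1[OF c] c, of L] lev_sub[OF oe2[OF c] c, of L] lenP lenQ
    unfolding P_def Q_def by blast
  have absEq: "absb L P = absb L Q"
    using levEq by (auto simp: absb_def cv_def fun_eq_iff)
  have varPQ: "p \<in> set Q" if h: "p \<in> set P" "isv (snd p)" "\<not> absb L P (fst p)" for p
  proof -
    obtain s l where p: "p = (s,l)" by (cases p)
    then obtain x where "l = Var x" using paths_leaf[of s l m] h(1,2) by (auto simp: P_def isv_def)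
    then show ?thesis using var_sub[OF oe1 ab, where L=L and x=x and s=s] h p lenP lenQ levEq
      unfolding P_def Q_def by auto
  qed
  have varQP: "p \<in> set P" if h: "p \<in> set Q" "isv (snd p)" "\<not> absb L Q (fst p)" for p
  proof -
    obtain s l where p: "p = (s,l)" by (cases p)
    then obtain x where "l = Var x" using paths_leaf[of s l n] h(1,2) by (auto simp: Q_def isv_def)
    then show ?thesis using var_sub[OF oe2 ab, where L=L and x=x and s=s] h p lenP lenQ levEq
      unfolding P_def Q_def by auto
  qed
  have BLeq: "set (BL L P) = set (BL L Q)"
    unfolding BL_def using levEq[of Yes] levEq[of No] varPQ varQP absEq
    by (auto simp: cv_def)
  have "deriv m (sumL (map tm (BL L P)))" using NF[of m L] lenP by (simp add: P_def)
  also have "deriv \<dots> (sumL (map tm (BL L Q)))" by (rule sumL_set) (simp add: BLeq)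
  also have "deriv \<dots> n" using NF[of n L] lenQ by (simp add: Q_def dsym)
  finally show ?thesis .
qed

end
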